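(* Let $P$ be an instance of $k$-means clustering with $z$ outliers, $\delta\in(0,1)$, and let $S$ be a finite nonempty multiset of points of $P$ such that $|S\cap C^*_j|\ge(1-\delta)\frac{|C^*_j|}{n}|S|$ for every $1\le j\le k$. Let $S_{opt}=S\cap P_{opt}$. Then for any finite set $H\subset\mathbb{R}^D$, $Cost(\tilde P_{opt},H)\le\frac{1}{1-\delta}\frac{n}{|S|}Cost(\tilde S_{opt},H)$.
   Context: $P\subset\mathbb{R}^D$, $|P|=n$, $0<z<n$. $dist(p,H)=\min_{q\in H}\|p-q\|$; $Cost(X,Y)=\sum_{q\in X}dist(q,Y)^2$ (with multiplicity). $P_{opt}\subset P$ with $|P_{opt}|=n-z$ is the set of inliers of an optimal solution of $k$-means with $z$ outliers, $C^*_1,\dots,C^*_k$ the optimal clusters forming $P_{opt}$, $o^*_j$ the mean of $C^*_j$. Star shaped transformation: for $p\in C^*_j$, $\tilde p=o^*_j$; for $U\subseteq P_{opt}$ (multiset), $\tilde U=\{\tilde p:p\in U\}$ as a multiset. *)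

theory Defs
  imports "HOL-Analysis.Analysis" "HOL-Library.Multiset"
begin

text \<open>Points live in an arbitrary Euclidean space 'a (playing the role of R^D).
  dist(p,H) is infdist p H (the minimum distance for finite nonempty H).\<close>

definition Cost :: "'a::euclidean_space multiset \<Rightarrow> 'a set \<Rightarrow> real" where
  "Cost X H = (\<Sum>q\<in>#X. (infdist q H)^2)"

definition mean :: "'a::euclidean_space set \<Rightarrow> 'a" where
  "mean C = (1 / real (card C)) *\<^sub>R (\<Sum>p\<in>C. p)"

definition set_cost :: "'a::euclidean_space set \<Rightarrow> 'a set \<Rightarrow> real" where
  "set_cost Q X = (\<Sum>q\<in>Q. (infdist q X)^2)"

text \<open>Popt together with clusters C 1, ..., C k is the inlier set / clustering of an optimal
  solution of k-means with z outliers on P: Popt has n - z points of P, it is partitioned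
  into the clusters, each cluster consists of points assigned to a nearest center c j
  of a center set of size at most k, and this solution has minimum cost among all choices
  of n - z inliers and at most k centers.\<close>
definition opt_kmeans_outliers ::
  "'a::euclidean_space set \<Rightarrow> nat \<Rightarrow> nat \<Rightarrow> 'a set \<Rightarrow> (nat \<Rightarrow> 'a set) \<Rightarrow> bool" where
  "opt_kmeans_outliers P k z Popt C \<longleftrightarrow>
     Popt \<subseteq> P \<and> card Popt = card P - z \<and>
     (\<Union>j\<in>{1..k}. C j) = Popt \<and>
     (\<forall>i\<in>{1..k}. \<forall>j\<in>{1..k}. i \<noteq> j \<longrightarrow> C i \<inter> C j = {}) \<and>
     (\<exists>c::nat \<Rightarrow> 'a.
        (\<forall>j\<in>{1..k}. \<forall>p\<in>C j. dist p (c j) = infdist p (c ` {1..k})) \<and>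
        (\<forall>Q X. Q \<subseteq> P \<longrightarrow> card Q = card P - z \<longrightarrow> finite X \<longrightarrow> X \<noteq> {} \<longrightarrow> card X \<le> k \<longrightarrow>
             set_cost Popt (c ` {1..k}) \<le> set_cost Q X))"

definition star :: "nat \<Rightarrow> (nat \<Rightarrow> 'a::euclidean_space set) \<Rightarrow> 'a \<Rightarrow> 'a" where
  "star k C p = mean (C (THE j. j \<in> {1..k} \<and> p \<in> C j))"

end

theory Submission
  imports Defs
begin

lemma cost_decomp:
  fixes f :: "'a::euclidean_space \<Rightarrow> 'a" and C :: "nat \<Rightarrow> 'a set"
  assumes fin: "finite J"
    and disj: "\<forall>i\<in>J. \<forall>j\<in>J. i \<noteq> j \<longrightarrow> C i \<inter> C j = {}"
    and fc: "\<forall>j\<in>J. \<forall>p\<in>C j. f p = c j"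
  shows "set_mset M \<subseteq> (\<Union>j\<in>J. C j) \<Longrightarrow> Cost (image_mset f M) H
     = (\<Sum>j\<in>J. real (size (filter_mset (\<lambda>p. p \<in> C j) M)) * infdist (c j) H ^ 2)"
proof (induction M)
  case empty
  then show ?case by (simp add: Cost_def)
next
  case (add x M)
  then have IH: "Cost (image_mset f M) H
     = (\<Sum>j\<in>J. real (size (filter_mset (\<lambda>p. p \<in> C j) M)) * infdist (c j) H ^ 2)" by auto
  from add.prems obtain j0 where j0: "j0 \<in> J" "x \<in> C j0" by auto
  have one: "{j\<in>J. x \<in> C j} = {j0}" using j0 disj by blast
  have "(\<Sum>j\<in>J. real (size (filter_mset (\<lambda>p. p \<in> C j) (add_mset x M))) * infdist (c j) H ^ 2)
     = (\<Sum>j\<in>J. (if x \<in> C j then infdist (c j) H ^ 2 else 0) +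
            real (size (filter_mset (\<lambda>p. p \<in> C j) M)) * infdist (c j) H ^ 2)"
    by (rule sum.cong) (auto simp: algebra_simps)
  also have "\<dots> = (\<Sum>j\<in>J. (if x \<in> C j then infdist (c j) H ^ 2 else 0)) + Cost (image_mset f M) H"
    by (simp add: sum.distrib IH)
  also have "(\<Sum>j\<in>J. (if x \<in> C j then infdist (c j) H ^ 2 else 0)) = infdist (c j0) H ^ 2"
    proof -
    have "J \<inter> {j. x \<in> C j} = {j0}" using one by blast
    then show ?thesis using fin by (simp add: sum.If_cases)
  qed
  also have "infdist (c j0) H ^ 2 = infdist (f x) H ^ 2" using fc j0 by auto
  finally show ?case by (simp add: Cost_def)
qed

theorem lemma7:
  fixes P :: "'a::euclidean_space set" and k z :: nat and Popt :: "'a set"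
    and C :: "nat \<Rightarrow> 'a set" and \<delta> :: real and S :: "'a multiset" and H :: "'a set"
  assumes "finite P" and "0 < z" and "z < card P" and "1 \<le> k"
    and "opt_kmeans_outliers P k z Popt C"
    and "0 < \<delta>" and "\<delta> < 1"
    and "S \<noteq> {#}" and "set_mset S \<subseteq> P"
    and "\<forall>j\<in>{1..k}. real (size (filter_mset (\<lambda>p. p \<in> C j) S))
            \<ge> (1 - \<delta>) * (real (card (C j)) / real (card P)) * real (size S)"
    and "finite H"
  shows "Cost (image_mset (star k C) (mset_set Popt)) H
     \<le> (1 / (1 - \<delta>)) * (real (card P) / real (size S))
        * Cost (image_mset (star k C) (filter_mset (\<lambda>p. p \<in> Popt) S)) H"
proof -
  note opt = assms(5)[unfolded opt_kmeans_outliers_def]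
  have sub: "Popt \<subseteq> P" and un: "(\<Union>j\<in>{1..k}. C j) = Popt"
    and disj: "\<forall>i\<in>{1..k}. \<forall>j\<in>{1..k}. i \<noteq> j \<longrightarrow> C i \<inter> C j = {}"
    using opt by auto
  have finPopt: "finite Popt" using sub assms(1) finite_subset by blast
  have Csub: "\<And>j. j \<in> {1..k} \<Longrightarrow> C j \<subseteq> Popt" using un by blast
  have fc: "\<forall>j\<in>{1..k}. \<forall>p\<in>C j. star k C p = mean (C j)"
  proof (intro ballI)
    fix j p assume j: "j \<in> {1..k}" and p: "p \<in> C j"
    have "(THE j. j \<in> {1..k} \<and> p \<in> C j) = j"
      using j p disj by (intro the_equality) blast+
    then show "star k C p = mean (C j)" by (simp add: star_def)
  qed
  define w where "w j = infdist (mean (C j)) H ^ 2" for j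
  define n where "n = real (card P)"
  define s where "s = real (size S)"
  have npos: "n > 0" using assms(3) n_def by simp
  have spos: "s > 0" using assms(8) s_def by (simp add: nonempty_has_size)
  have L: "Cost (image_mset (star k C) (mset_set Popt)) H
      = (\<Sum>j\<in>{1..k}. real (card (C j)) * w j)"
  proof -
    have "Cost (image_mset (star k C) (mset_set Popt)) H
      = (\<Sum>j\<in>{1..k}. real (size (filter_mset (\<lambda>p. p \<in> C j) (mset_set Popt))) * w j)"
      unfolding w_def by (rule cost_decomp[OF _ disj fc]) (use finPopt un in auto)
    also have "\<dots> = (\<Sum>j\<in>{1..k}. real (card (C j)) * w j)"
    proof (rule sum.cong[OF refl])
      fix j assume j: "j \<in> {1..k}"
      have "{x \<in> Popt. x \<in> C j} = C j" using Csub[OF j] by blast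
      then show "real (size (filter_mset (\<lambda>p. p \<in> C j) (mset_set Popt))) * w j = real (card (C j)) * w j"
        using finPopt by simp
    qed
    finally show ?thesis .
  qed
  have R: "Cost (image_mset (star k C) (filter_mset (\<lambda>p. p \<in> Popt) S)) H
      = (\<Sum>j\<in>{1..k}. real (size (filter_mset (\<lambda>p. p \<in> C j) S)) * w j)"
  proof -
    have "Cost (image_mset (star k C) (filter_mset (\<lambda>p. p \<in> Popt) S)) H
      = (\<Sum>j\<in>{1..k}. real (size (filter_mset (\<lambda>p. p \<in> C j) (filter_mset (\<lambda>p. p \<in> Popt) S))) * w j)"
      unfolding w_def by (rule cost_decomp[OF _ disj fc]) (use un in auto)
    also have "\<dots> = (\<Sum>j\<in>{1..k}. real (size (filter_mset (\<lambda>p. p \<in> C j) S)) * w j)"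
    proof (rule sum.cong[OF refl])
      fix j assume j: "j \<in> {1..k}"
      have "filter_mset (\<lambda>p. p \<in> C j) (filter_mset (\<lambda>p. p \<in> Popt) S) = filter_mset (\<lambda>p. p \<in> C j) S"
        using Csub[OF j] by (auto simp: filter_filter_mset intro: filter_mset_cong)
      then show "real (size (filter_mset (\<lambda>p. p \<in> C j) (filter_mset (\<lambda>p. p \<in> Popt) S))) * w j = real (size (filter_mset (\<lambda>p. p \<in> C j) S)) * w j"
        by simp
    qed
    finally show ?thesis .
  qed
  have key: "real (card (C j)) * w j \<le> (1 / (1 - \<delta>)) * (n / s) * (real (size (filter_mset (\<lambda>p. p \<in> C j) S)) * w j)"
    if j: "j \<in> {1..k}" for j
  proof -
    have w0: "w j \<ge> 0" by (simp add: w_def)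
    have h: "(1 - \<delta>) * (real (card (C j)) / n) * s \<le> real (size (filter_mset (\<lambda>p. p \<in> C j) S))"
      using assms(10) j n_def s_def by auto
    have d: "1 - \<delta> > 0" using assms(7) by simp
    have "real (card (C j)) = (1 / (1 - \<delta>)) * (n / s) * ((1 - \<delta>) * (real (card (C j)) / n) * s)"
      using npos spos d by (simp add: field_simps)
    also have "\<dots> \<le> (1 / (1 - \<delta>)) * (n / s) * real (size (filter_mset (\<lambda>p. p \<in> C j) S))"
      by (rule mult_left_mono[OF h]) (use npos spos d in simp)
    finally show ?thesis using w0 by (metis mult.assoc mult_right_mono)
  qed
  have "(\<Sum>j\<in>{1..k}. real (card (C j)) * w j)
     \<le> (\<Sum>j\<in>{1..k}. (1 / (1 - \<delta>)) * (n / s) * (real (size (filter_mset (\<lambda>p. p \<in> C j) S)) * w j))"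
    by (rule sum_mono) (rule key)
  also have "\<dots> = (1 / (1 - \<delta>)) * (n / s) * (\<Sum>j\<in>{1..k}. real (size (filter_mset (\<lambda>p. p \<in> C j) S)) * w j)"
    by (simp add: sum_distrib_left)
  finally show ?thesis using L R n_def s_def by simp
qed

end
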